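(* Let $n$, $q\ge2$ and $a\in[1:n]$ be integers, and $\nu=\lceil (n+1)/a\rceil$. For any $\mathbf{l}=(l_1,\dots,l_{q-1})\in[1:\nu]^{q-1}$, the cell $$C_{\mathbf{l}}=\{\mathbf{t}\in\mathcal{N}_{q,n}:(l_i-1)a\le t_i\le l_ia-1\ \ \forall i\in[1:q-1]\}$$ is non-empty if and only if $q-1\le\sum_{i=1}^{q-1}l_i\le\frac na+(q-1)$.
   Context: $\mathcal{N}_{q,n}=\{\mathbf{t}\in\mathbb{Z}_{\ge0}^q:\sum_{i=1}^qt_i=n\}$. *)

theory Defs
  imports Complex_Main
begin

text \<open>Compositions N_{q,n}: vectors t = (t_1,...,t_q) of nonnegative integers with sum n,
  represented as functions nat => nat that vanish outside the index set {1..q}.\<close>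
definition compositions :: "nat \<Rightarrow> nat \<Rightarrow> (nat \<Rightarrow> nat) set" where
  "compositions q n = {t. (\<forall>i. i \<notin> {1..q} \<longrightarrow> t i = 0) \<and> (\<Sum>i=1..q. t i) = n}"

definition cell :: "nat \<Rightarrow> nat \<Rightarrow> nat \<Rightarrow> (nat \<Rightarrow> nat) \<Rightarrow> (nat \<Rightarrow> nat) set" where
  "cell q n a l = {t \<in> compositions q n.
     \<forall>i\<in>{1..q-1}. (l i - 1) * a \<le> t i \<and> t i \<le> l i * a - 1}"

end

theory Submission
  imports Defs
begin

lemma sum_minus_one:
  assumes "\<forall>i\<in>{1..m}. 1 \<le> (l::nat\<Rightarrow>nat) i"
  shows "(\<Sum>i=1..m. (l i - 1) * a) = a * ((\<Sum>i=1..m. l i) - m) \<and> m \<le> (\<Sum>i=1..m. l i)"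
  using assms
proof (induction m)
  case 0
  then show ?case by simp
next
  case (Suc m)
  then have h: "(\<Sum>i=1..m. (l i - 1) * a) = a * ((\<Sum>i=1..m. l i) - m) \<and> m \<le> (\<Sum>i=1..m. l i)"
    by auto
  have "1 \<le> l (Suc m)" using Suc.prems by auto
  then show ?case using h
    by (simp add: algebra_simps diff_mult_distrib2 diff_mult_distrib)
qed

theorem lemma12:
  fixes n q a :: nat and l :: "nat \<Rightarrow> nat"
  assumes "n \<ge> 2" and "q \<ge> 2" and "1 \<le> a" and "a \<le> n"
    and "\<forall>i\<in>{1..q-1}. 1 \<le> l i \<and> l i \<le> nat \<lceil>real (n + 1) / real a\<rceil>"
  shows "cell q n a l \<noteq> {} \<longleftrightarrow>
    (real (q - 1) \<le> real (\<Sum>i=1..q-1. l i) \<and>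
     real (\<Sum>i=1..q-1. l i) \<le> real n / real a + real (q - 1))"
proof -
  define m where "m = q - 1"
  define L where "L = (\<Sum>i=1..m. l i)"
  have qm: "q = Suc m" using assms(2) m_def by simp
  have SM: "(\<Sum>i=1..m. (l i - 1) * a) = a * (L - m)" and mL: "m \<le> L"
    using sum_minus_one[of m l a] assms(5) unfolding m_def L_def by auto
  have ap: "real a > 0" using assms(3) by simp
  have eqv: "(real L \<le> real n / real a + real m) \<longleftrightarrow> a * (L - m) \<le> n"
  proof -
    have "(real L \<le> real n / real a + real m) \<longleftrightarrow> real (L - m) \<le> real n / real a"
      using mL by (simp add: of_nat_diff, linarith)
    also have "\<dots> \<longleftrightarrow> real a * real (L - m) \<le> real n"
      using ap by (simp add: pos_le_divide_eq mult.commute)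
    also have "\<dots> \<longleftrightarrow> a * (L - m) \<le> n"
      by (metis of_nat_le_iff of_nat_mult)
    finally show ?thesis .
  qed
  have "cell q n a l \<noteq> {} \<longleftrightarrow> a * (L - m) \<le> n"
  proof
    assume "cell q n a l \<noteq> {}"
    then obtain t where t: "t \<in> cell q n a l" by blast
    then have tc: "(\<Sum>i=1..q. t i) = n"
      and tb: "\<forall>i\<in>{1..m}. (l i - 1) * a \<le> t i"
      unfolding cell_def compositions_def m_def by auto
    have "a * (L - m) \<le> (\<Sum>i=1..m. t i)"
      unfolding SM[symmetric] by (rule sum_mono) (use tb in auto)
    also have "\<dots> \<le> (\<Sum>i=1..q. t i)"
      by (rule sum_mono2) (auto simp: qm)
    finally show "a * (L - m) \<le> n" using tc by simp
  next
    assume le: "a * (L - m) \<le> n"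
    define t where "t i = (if i \<in> {1..m} then (l i - 1) * a else if i = q then n - a * (L - m) else 0)" for i
    have s1: "(\<Sum>i=1..m. t i) = a * (L - m)"
      unfolding SM[symmetric] t_def by (rule sum.cong) auto
    have "(\<Sum>i=1..q. t i) = (\<Sum>i=1..m. t i) + t q"
      by (simp add: qm)
    also have "\<dots> = n" using s1 le by (simp add: t_def qm)
    finally have "t \<in> compositions q n"
      unfolding compositions_def by (auto simp: t_def qm)
    moreover have "\<forall>i\<in>{1..q-1}. (l i - 1) * a \<le> t i \<and> t i \<le> l i * a - 1"
    proof
      fix i assume i: "i \<in> {1..q-1}"
      then have "1 \<le> l i" using assms(5) by auto
      then have "(l i - 1) * a \<le> l i * a - 1" using assms(3)
        by (simp add: diff_mult_distrib)
      then show "(l i - 1) * a \<le> t i \<and> t i \<le> l i * a - 1"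
        using i by (simp add: t_def m_def)
    qed
    ultimately have "t \<in> cell q n a l" unfolding cell_def by blast
    then show "cell q n a l \<noteq> {}" by blast
  qed
  then show ?thesis using eqv mL unfolding m_def[symmetric] L_def[symmetric] by simp
qed

end
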